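(* Let $r\geq 3$ be an integer and $c>0$ a real number. If $G$ is a graph of order $n$ with minimum degree $$\delta(G)>\left(\frac{r-1}{r}+c\right)n,$$ then $$k_{r+1}(G)>c\,\frac{r}{r+1}\left(\frac{n}{r}\right)^{r+1}\qquad\text{and}\qquad js^{(2,r+1,2)}(G)>c\left(\frac{n}{r}\right)^{r-2}.$$
   Context: All graphs are finite and simple. $\delta(G)$ denotes the minimum degree of $G$ and $k_s(G)$ is the number of $s$-cliques of $G$. For an integer $r\geq 2$, $js^{(2,r+1,2)}(G)$ is the maximum, over all edges $uv$ of $G$, of the number of $(r+1)$-cliques of $G$ containing both $u$ and $v$ (and $0$ if $G$ has no edges). *)

theory Defs
  imports Complex_Main
begin

definition simple_graph :: "'a set \<Rightarrow> 'a set set \<Rightarrow> bool" where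
  "simple_graph V E \<longleftrightarrow> finite V \<and> (\<forall>e\<in>E. e \<subseteq> V \<and> card e = 2)"

definition degree :: "'a set \<Rightarrow> 'a set set \<Rightarrow> 'a \<Rightarrow> nat" where
  "degree V E v = card {u \<in> V. {u, v} \<in> E}"

definition min_degree :: "'a set \<Rightarrow> 'a set set \<Rightarrow> nat" where
  "min_degree V E = (if V = {} then 0 else Min (degree V E ` V))"

definition is_clique :: "'a set \<Rightarrow> 'a set set \<Rightarrow> 'a set \<Rightarrow> bool" where
  "is_clique V E K \<longleftrightarrow> K \<subseteq> V \<and> (\<forall>u\<in>K. \<forall>v\<in>K. u \<noteq> v \<longrightarrow> {u, v} \<in> E)"

definition k_cliques :: "nat \<Rightarrow> 'a set \<Rightarrow> 'a set set \<Rightarrow> nat" where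
  "k_cliques s V E = card {K. is_clique V E K \<and> card K = s}"

definition edge_cliques :: "nat \<Rightarrow> 'a set \<Rightarrow> 'a set set \<Rightarrow> 'a set \<Rightarrow> nat" where
  "edge_cliques s V E e = card {K. is_clique V E K \<and> card K = s \<and> e \<subseteq> K}"

text \<open>js^(2,r+1,2)(G): max over edges of the number of (r+1)-cliques
  containing the edge; 0 if there are no edges.\<close>
definition js_edge :: "nat \<Rightarrow> 'a set \<Rightarrow> 'a set set \<Rightarrow> nat" where
  "js_edge r V E = (if E = {} then 0 else Max (edge_cliques (r + 1) V E ` E))"

end

theory Submission
  imports Defs "HOL-Combinatorics.Multiset_Permutations"
begin

definition nbh :: "'a set \<Rightarrow> 'a set set \<Rightarrow> 'a set \<Rightarrow> 'a set" where
  "nbh V E K = {v\<in>V. \<forall>u\<in>K. {u,v} \<in> E}"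

definition lst :: "'a set \<Rightarrow> 'a set set \<Rightarrow> 'a list \<Rightarrow> nat \<Rightarrow> 'a list set" where
  "lst V E P m = {xs. length xs = m \<and> distinct (xs @ P) \<and> is_clique V E (set (xs @ P))}"

lemma nonnbr_bound:
  assumes sg: "simple_graph V E" and K: "K \<subseteq> V"
  shows "card V \<le> card (nbh V E K) + card K * (card V - min_degree V E)"
proof (cases "V = {}")
  case True then show ?thesis by simp
next
  case False
  have fV: "finite V" using sg by (simp add: simple_graph_def)
  have fK: "finite K" using K fV finite_subset by blast
  have eq: "V - nbh V E K = (\<Union>u\<in>K. {v\<in>V. {u,v} \<notin> E})"
    unfolding nbh_def by auto
  have each: "card {v\<in>V. {u,v} \<notin> E} \<le> card V - min_degree V E" if u: "u \<in> K" for u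
  proof -
    have uV: "u \<in> V" using u K by blast
    have "{v\<in>V. {u,v} \<notin> E} = V - {w\<in>V. {w,u} \<in> E}" by (auto simp: insert_commute)
    then have "card {v\<in>V. {u,v} \<notin> E} = card V - degree V E u"
      unfolding degree_def using fV by (simp add: card_Diff_subset)
    moreover have "min_degree V E \<le> degree V E u"
      unfolding min_degree_def using False uV fV by simp
    ultimately show ?thesis by linarith
  qed
  have "card (V - nbh V E K) \<le> (\<Sum>u\<in>K. card {v\<in>V. {u,v} \<notin> E})"
    unfolding eq by (rule card_UN_le[OF fK])
  also have "\<dots> \<le> (\<Sum>u\<in>K. card V - min_degree V E)"
    by (rule sum_mono) (use each in auto)
  also have "\<dots> = card K * (card V - min_degree V E)" by simp
  finally have "card (V - nbh V E K) \<le> card K * (card V - min_degree V E)" .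
  moreover have "card V \<le> card (nbh V E K) + card (V - nbh V E K)"
  proof -
    have "V = nbh V E K \<union> (V - nbh V E K)" unfolding nbh_def by blast
    then show ?thesis by (metis card_Un_le)
  qed
  ultimately show ?thesis by linarith
qed

lemma lst_finite:
  assumes "finite V" shows "finite (lst V E P m)"
proof -
  have "lst V E P m \<subseteq> {xs. set xs \<subseteq> V \<and> length xs = m}"
    unfolding lst_def is_clique_def by auto
  then show ?thesis using finite_lists_length_eq[OF assms] finite_subset by blast
qed

lemma nbh_finite: "finite V \<Longrightarrow> finite (nbh V E K)"
  unfolding nbh_def by simp

lemma lst_Suc:
  assumes sg: "simple_graph V E"
  shows "lst V E P (Suc m) = (\<lambda>(xs,w). w # xs) ` (SIGMA xs:lst V E P m. nbh V E (set (xs @ P)))"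
proof -
  have noloop: "{w,w} \<notin> E" for w using sg unfolding simple_graph_def by fastforce
  show ?thesis
  proof (intro set_eqI iffI)
    fix ys assume "ys \<in> lst V E P (Suc m)"
    then obtain w xs where ys: "ys = w # xs" and l: "length xs = m" and d: "distinct (w # xs @ P)"
      and c: "is_clique V E (set (w # xs @ P))"
      unfolding lst_def by (cases ys) auto
    have "xs \<in> lst V E P m" using l d c unfolding lst_def is_clique_def by auto
    moreover have "w \<in> nbh V E (set (xs @ P))" using d c unfolding nbh_def is_clique_def
      by (auto simp: insert_commute)
    ultimately show "ys \<in> (\<lambda>(xs,w). w # xs) ` (SIGMA xs:lst V E P m. nbh V E (set (xs @ P)))"
      using ys by force
  next
    fix ys assume "ys \<in> (\<lambda>(xs,w). w # xs) ` (SIGMA xs:lst V E P m. nbh V E (set (xs @ P)))"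
    then obtain w xs where ys: "ys = w # xs" and xs: "xs \<in> lst V E P m" and w: "w \<in> nbh V E (set (xs @ P))"
      by auto
    have wn: "w \<notin> set (xs @ P)" using w noloop unfolding nbh_def by blast
    show "ys \<in> lst V E P (Suc m)" using xs w wn ys unfolding lst_def nbh_def is_clique_def
      by (auto simp: insert_commute)
  qed
qed

lemma lst_card_Suc:
  assumes sg: "simple_graph V E"
  shows "card (lst V E P (Suc m)) = (\<Sum>xs\<in>lst V E P m. card (nbh V E (set (xs @ P))))"
proof -
  have fV: "finite V" using sg by (simp add: simple_graph_def)
  have inj: "inj_on (\<lambda>(xs,w). w # xs) (SIGMA xs:lst V E P m. nbh V E (set (xs @ P)))"
    by (auto simp: inj_on_def)
  show ?thesis
    unfolding lst_Suc[OF sg] card_image[OF inj]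
    using lst_finite[OF fV] nbh_finite[OF fV] by simp
qed

lemma lst_lower:
  assumes sg: "simple_graph V E" and dP: "distinct P" and cP: "is_clique V E (set P)"
    and pos: "\<forall>i<m. 0 \<le> real (card V) - real (length P + i) * real (card V - min_degree V E)"
  shows "(\<Prod>i<m. real (card V) - real (length P + i) * real (card V - min_degree V E))
           \<le> real (card (lst V E P m))"
  using pos
proof (induction m)
  case 0
  have "lst V E P 0 = {[]}" using dP cP unfolding lst_def by auto
  then show ?case by simp
next
  case (Suc m)
  define D where "D = real (card V - min_degree V E)"
  define f where "f = real (card V) - real (length P + m) * D"
  have fV: "finite V" using sg by (simp add: simple_graph_def)
  have IH: "(\<Prod>i<m. real (card V) - real (length P + i) * D) \<le> real (card (lst V E P m))"
    using Suc by (simp add: D_def)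
  have f0: "0 \<le> f" using Suc.prems unfolding f_def D_def by simp
  have each: "f \<le> real (card (nbh V E (set (xs @ P))))" if xs: "xs \<in> lst V E P m" for xs
  proof -
    have xd: "distinct (xs @ P)" "length xs = m" using xs unfolding lst_def by auto
    have "card (set (xs @ P)) = length (xs @ P)" by (rule distinct_card[OF xd(1)])
    then have "card (set (xs @ P)) = length P + m" using xd(2) by simp
    moreover have "set (xs @ P) \<subseteq> V" using xs unfolding lst_def is_clique_def by blast
    ultimately have "card V \<le> card (nbh V E (set (xs @ P))) + (length P + m) * (card V - min_degree V E)"
      using nonnbr_bound[OF sg] by metis
    then have "real (card V) \<le> real (card (nbh V E (set (xs @ P)))) + real (length P + m) * D"
      unfolding D_def by (metis of_nat_add of_nat_le_iff of_nat_mult)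
    then show ?thesis unfolding f_def by linarith
  qed
  have "(\<Prod>i<Suc m. real (card V) - real (length P + i) * D)
        = (\<Prod>i<m. real (card V) - real (length P + i) * D) * f"
    by (simp add: f_def)
  also have "\<dots> \<le> real (card (lst V E P m)) * f"
    using IH f0 by (rule mult_right_mono)
  also have "\<dots> = (\<Sum>xs\<in>lst V E P m. f)" by simp
  also have "\<dots> \<le> (\<Sum>xs\<in>lst V E P m. real (card (nbh V E (set (xs @ P)))))"
    by (rule sum_mono) (use each in auto)
  also have "\<dots> = real (card (lst V E P (Suc m)))"
    unfolding lst_card_Suc[OF sg] by simp
  finally show ?case unfolding D_def .
qed

lemma lst_upper:
  assumes fV: "finite V" and dP: "distinct P"
  shows "card (lst V E P m) \<le> fact m * card {K. is_clique V E K \<and> card K = length P + m \<and> set P \<subseteq> K}"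
proof -
  define C where "C = {K. is_clique V E K \<and> card K = length P + m \<and> set P \<subseteq> K}"
  have fC: "finite C" unfolding C_def is_clique_def
    by (rule finite_subset[of _ "Pow V"]) (use fV in auto)
  have sub: "lst V E P m \<subseteq> (\<Union>K\<in>C. permutations_of_set (K - set P))"
  proof
    fix xs assume xs: "xs \<in> lst V E P m"
    have xd: "distinct (xs @ P)" "length xs = m" using xs unfolding lst_def by auto
    have "card (set (xs @ P)) = length (xs @ P)" by (rule distinct_card[OF xd(1)])
    then have "card (set (xs @ P)) = length P + m" using xd(2) by simp
    then have "set (xs @ P) \<in> C" using xs unfolding lst_def C_def by auto
    moreover have "xs \<in> permutations_of_set (set (xs @ P) - set P)"
      using xs unfolding lst_def by (auto simp: permutations_of_set_def)
    ultimately show "xs \<in> (\<Union>K\<in>C. permutations_of_set (K - set P))" by blast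
  qed
  have cK: "card (permutations_of_set (K - set P)) = fact m" if K: "K \<in> C" for K
  proof -
    have fK: "finite K" using K fV unfolding C_def is_clique_def using finite_subset by blast
    have "card (K - set P) = m" using K fK dP unfolding C_def
      by (simp add: card_Diff_subset distinct_card)
    then show ?thesis using fK by simp
  qed
  have "card (lst V E P m) \<le> card (\<Union>K\<in>C. permutations_of_set (K - set P))"
    by (rule card_mono) (use fC sub in auto)
  also have "\<dots> \<le> (\<Sum>K\<in>C. card (permutations_of_set (K - set P)))"
    by (rule card_UN_le[OF fC])
  also have "\<dots> = (\<Sum>K\<in>C. fact m)" using cK by simp
  also have "\<dots> = fact m * card C" by simp
  finally show ?thesis unfolding C_def .
qed


lemma real_fact_rev: "(\<Prod>i<k. real (k - i)) = fact k"
  by (simp add: fact_prod_rev atLeast0LessThan)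

lemma prod_bound:
  fixes n D c :: real
  assumes n: "n > 0" and D0: "D \<ge> 0" and rD: "real r * D < n - real r * c * n" and c: "c > 0"
    and ak: "a + k = r" and rpos: "r > 0"
  shows "(n / real r) ^ k * fact k * (real r * c * n) < (\<Prod>i<Suc k. n - real (a + i) * D)"
    and "\<forall>i<Suc k. 0 \<le> n - real (a + i) * D"
proof -
  have r0: "real r > 0" using rpos by simp
  have "0 \<le> real r * c * n" using r0 c n by simp
  then have "real r * D \<le> n" using rD by linarith
  then have Dle: "D \<le> n / real r" using r0 by (simp add: pos_le_divide_eq mult.commute)
  have last: "real r * c * n < n - real (a + k) * D" using rD ak by simp
  have fi: "n / real r * real (k - i) \<le> n - real (a + i) * D" if i: "i < k" for i
  proof -
    have "real (a + i) * D \<le> real (a + i) * (n / real r)" by (rule mult_left_mono[OF Dle]) simp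
    moreover have "n / real r * real (k - i) = n - real (a + i) * (n / real r)"
    proof -
      have r_eq: "real r = real a + real k" using ak by simp
      show ?thesis using i r0 by (simp add: field_simps of_nat_diff r_eq)
    qed
    ultimately show ?thesis by linarith
  qed
  have fpos: "0 \<le> n / real r * real (k - i)" for i using n r0 by simp
  have "(n / real r) ^ k * fact k = (\<Prod>i<k. n / real r * real (k - i))"
    by (simp only: prod.distrib real_fact_rev prod_constant card_lessThan)
  also have "\<dots> \<le> (\<Prod>i<k. n - real (a + i) * D)"
    by (intro prod_mono conjI fpos fi) simp
  finally have P: "(n / real r) ^ k * fact k \<le> (\<Prod>i<k. n - real (a + i) * D)" .
  have Ppos: "0 < (n / real r) ^ k * fact k" using n r0 by simp
  have rcn: "0 < real r * c * n" using r0 c n by simp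
  have "(n / real r) ^ k * fact k * (real r * c * n) < (n / real r) ^ k * fact k * (n - real (a + k) * D)"
    by (rule mult_strict_left_mono[OF last Ppos])
  also have "\<dots> \<le> (\<Prod>i<k. n - real (a + i) * D) * (n - real (a + k) * D)"
    using P last rcn by (intro mult_right_mono) auto
  finally show "(n / real r) ^ k * fact k * (real r * c * n) < (\<Prod>i<Suc k. n - real (a + i) * D)"
    by simp
  show "\<forall>i<Suc k. 0 \<le> n - real (a + i) * D"
  proof (intro allI impI)
    fix i assume "i < Suc k"
    then consider "i < k" | "i = k" by linarith
    then show "0 \<le> n - real (a + i) * D"
    proof cases
      case 1 then show ?thesis using fi[of i] fpos[of i] by linarith
    next
      case 2 then show ?thesis using last rcn by simp
    qed
  qed
qed


theorem corollary2:
  fixes V :: "'a set" and E :: "'a set set" and r :: nat and c :: real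
  assumes "simple_graph V E"
    and "r \<ge> 3"
    and "c > 0"
    and "real (min_degree V E) > ((real r - 1) / real r + c) * real (card V)"
  shows "real (k_cliques (r + 1) V E) > c * (real r / (real r + 1)) * (real (card V) / real r) ^ (r + 1)
    \<and> real (js_edge r V E) > c * (real (card V) / real r) ^ (r - 2)"
proof -
  note sg = assms(1) and r3 = assms(2) and c = assms(3) and md = assms(4)
  have fV: "finite V" using sg by (simp add: simple_graph_def)
  define n where "n = real (card V)"
  define D where "D = real (card V - min_degree V E)"
  have Vne: "V \<noteq> {}"
  proof
    assume "V = {}" then show False using md by (simp add: min_degree_def)
  qed
  have n0: "n > 0" using Vne fV unfolding n_def by (simp add: card_gt_0_iff)
  have mdle: "min_degree V E \<le> card V"
  proof -
    obtain v where v: "v \<in> V" using Vne by blast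
    have "min_degree V E \<le> degree V E v" unfolding min_degree_def using Vne v fV by simp
    also have "\<dots> \<le> card V" unfolding degree_def using fV by (intro card_mono) auto
    finally show ?thesis .
  qed
  have Dn: "D = n - real (min_degree V E)" unfolding D_def n_def using mdle by (simp add: of_nat_diff)
  have D0: "D \<ge> 0" unfolding D_def by simp
  have rpos: "r > 0" using r3 by simp
  have rD: "real r * D < n - real r * c * n"
  proof -
    have "real r * real (min_degree V E) > real r * (((real r - 1) / real r + c) * n)"
      using md rpos unfolding n_def by simp
    also have "real r * (((real r - 1) / real r + c) * n) = (real r - 1) * n + real r * c * n"
      using rpos by (simp add: field_simps)
    finally show ?thesis unfolding Dn by (simp add: algebra_simps)
  qed
  have part1: "real (k_cliques (r + 1) V E) > c * (real r / (real r + 1)) * (n / real r) ^ (r + 1)"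
  proof -
    note pb = prod_bound[OF n0 D0 rD c, of 0 r, simplified, OF rpos]
    have low: "(\<Prod>i<Suc r. n - real i * D) \<le> real (card (lst V E [] (Suc r)))"
      using lst_lower[OF sg, of "[]" "Suc r"] pb(2) unfolding n_def D_def
      by (simp add: is_clique_def)
    have up: "card (lst V E [] (Suc r)) \<le> fact (Suc r) * k_cliques (r + 1) V E"
      using lst_upper[OF fV, of "[]" E "Suc r"] unfolding k_cliques_def by simp
    define X where "X = c * (real r / (real r + 1)) * (n / real r) ^ (r + 1)"
    have X0: "X > 0" unfolding X_def using c n0 rpos by simp
    have f: "(fact (Suc r) :: real) = (real r + 1) * fact r" by (simp add: fact_Suc)
    have p: "(n / real r) ^ (r + 1) * real r = (n / real r) ^ r * n" using rpos by simp
    have q: "(real r / (real r + 1)) * (real r + 1) = real r" by simp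
    have "(real r * X) * fact (Suc r)
        = c * real r * ((real r / (real r + 1)) * (real r + 1)) * ((n / real r) ^ (r + 1)) * fact r"
      unfolding X_def f by (simp only: mult_ac)
    also have "\<dots> = c * real r * ((n / real r) ^ (r + 1) * real r) * fact r"
      unfolding q by (simp only: mult_ac)
    also have "\<dots> = (n / real r) ^ r * fact r * (real r * c * n)"
      unfolding p by (simp only: mult_ac)
    finally have eq: "(n / real r) ^ r * fact r * (real r * c * n) = (real r * X) * fact (Suc r)" by (rule sym)
    have "(real r * X) * fact (Suc r) < real (k_cliques (r + 1) V E) * fact (Suc r)"
    proof -
      have "(real r * X) * fact (Suc r) < (\<Prod>i<Suc r. n - real i * D)" using pb(1) eq by simp
      also have "\<dots> \<le> real (card (lst V E [] (Suc r)))" by (rule low)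
      also have "\<dots> \<le> real (fact (Suc r) * k_cliques (r + 1) V E)" using up by (simp only: of_nat_le_iff)
      also have "\<dots> = real (k_cliques (r + 1) V E) * fact (Suc r)" by (simp only: of_nat_mult of_nat_fact mult.commute)
      finally show ?thesis .
    qed
    then have "real r * X < real (k_cliques (r + 1) V E)"
      by (rule mult_right_less_imp_less) simp
    moreover have "1 * X \<le> real r * X" using X0 r3 by (intro mult_right_mono) auto
    ultimately show ?thesis unfolding X_def by linarith
  qed
  have part2: "real (js_edge r V E) > c * (n / real r) ^ (r - 2)"
  proof -
    obtain v where v: "v \<in> V" using Vne by blast
    have "0 \<le> (real r - 1) / real r" using rpos by simp
    then have "0 < ((real r - 1) / real r + c) * n" using c n0 by simp
    then have "0 < real (min_degree V E)" using md unfolding n_def by linarith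
    then have "0 < min_degree V E" by simp
    also have "min_degree V E \<le> degree V E v" unfolding min_degree_def using Vne v fV by simp
    finally have "{w\<in>V. {w, v} \<in> E} \<noteq> {}" unfolding degree_def by (metis card.empty less_irrefl)
    then obtain u where u: "u \<in> V" "{u, v} \<in> E" by blast
    have uv: "u \<noteq> v" using u sg unfolding simple_graph_def by fastforce
    have cl: "is_clique V E {u, v}" using u v uv unfolding is_clique_def by (auto simp: insert_commute)
    define k where "k = r - 2"
    have rk: "r = 2 + k" "r - 1 = Suc k" "r + 1 = 2 + Suc k" using r3 unfolding k_def by auto
    note pb = prod_bound[OF n0 D0 rD c, of 2 k, OF rk(1)[symmetric] rpos]
    have low: "(\<Prod>i<Suc k. n - real (2 + i) * D) \<le> real (card (lst V E [u, v] (Suc k)))"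
      using lst_lower[OF sg, of "[u, v]" "Suc k"] pb(2) uv cl unfolding n_def D_def
      by simp
    have up: "card (lst V E [u, v] (Suc k)) \<le> fact (Suc k) * edge_cliques (r + 1) V E {u, v}"
      using lst_upper[OF fV, of "[u, v]" E "Suc k"] uv unfolding edge_cliques_def rk(3) by simp
    have fE: "finite E" using sg fV unfolding simple_graph_def
      by (metis Pow_iff finite_Pow_iff finite_subset subsetI)
    have js: "edge_cliques (r + 1) V E {u, v} \<le> js_edge r V E"
      unfolding js_edge_def using u fE by auto
    define Y where "Y = c * (n / real r) ^ k"
    have Y0: "Y > 0" unfolding Y_def using c n0 rpos by simp
    have eq: "(n / real r) ^ k * fact k * (real r * c * n) = (Y * real r * n) * fact k"
      unfolding Y_def by (simp add: field_simps)
    have "(Y * real r * n) * fact k < real (edge_cliques (r + 1) V E {u, v}) * real (Suc k) * fact k"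
    proof -
      have "(Y * real r * n) * fact k < (\<Prod>i<Suc k. n - real (2 + i) * D)" using pb(1) eq by simp
      also have "\<dots> \<le> real (card (lst V E [u, v] (Suc k)))" by (rule low)
      also have "\<dots> \<le> real (fact (Suc k) * edge_cliques (r + 1) V E {u, v})" using up by (simp only: of_nat_le_iff)
      also have "\<dots> = real (edge_cliques (r + 1) V E {u, v}) * real (Suc k) * fact k"
        by (simp add: fact_Suc algebra_simps)
      finally show ?thesis .
    qed
    then have A: "Y * real r * n < real (edge_cliques (r + 1) V E {u, v}) * real (Suc k)"
      by (rule mult_right_less_imp_less) simp
    have n1: "n \<ge> 1" using n0 unfolding n_def by simp
    have "Y * real (Suc k) \<le> Y * real r * n"
    proof -
      have "real (Suc k) \<le> real r" using rk(1) by simp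
      moreover have "real r * 1 \<le> real r * n" using n1 by (intro mult_left_mono) auto
      ultimately have "real (Suc k) \<le> real r * n" by linarith
      then show ?thesis using Y0 by (simp add: mult.assoc mult_left_mono)
    qed
    with A have "Y * real (Suc k) < real (edge_cliques (r + 1) V E {u, v}) * real (Suc k)" by linarith
    then have "Y < real (edge_cliques (r + 1) V E {u, v})" by (simp add: mult_less_cancel_right)
    then show ?thesis using js unfolding Y_def k_def by linarith
  qed
  show ?thesis using part1 part2 unfolding n_def by simp
qed

end
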